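(* Let $G$ be a finite simple graph on the vertex set $[n]$ and let $A$ be a minimal cut set of $G$. Then $A \in \mathcal{C}(G)$. Moreover, if $G$ is a generalized block graph, then for every $T \in \mathcal{C}(G)$, either $A \subseteq T$ or $A \cap T = \emptyset$.
   Context: For $T \subseteq [n]$ let $\overline{T} = [n]\setminus T$, let $G[\overline{T}]$ be the induced subgraph on $\overline{T}$, let $c_G(T)$ be the number of connected components of $G[\overline{T}]$, and let $c_G$ be the number of connected components of $G$. A subset $T \subset [n]$ is a cut set of $G$ if $c_G(T) > c_G$; a minimal cut set is a cut set minimal under inclusion. A vertex $v$ is a cut vertex of a graph $H$ if removing $v$ increases the number of connected components. $T$ has the cut point property if for each $i \in T$, $i$ is a cut vertex of $G[\overline{T}\cup\{i\}]$; $\mathcal{C}(G) = \{\emptyset\} \cup \{T : T \text{ has the cut point property}\}$. The clique complex $\Delta(G)$ is the simplicial complex whose facets are the maximal cliques of $G$. A chordal graph $G$ is a generalized block graph if whenever $F_i, F_j, F_k$ are facets of $\Delta(G)$ with $F_i \cap F_j \cap F_k \neq \emptyset$, then $F_i \cap F_j = F_i \cap F_k = F_j \cap F_k$. *)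

theory Defs
  imports Main
begin

definition simple_graph :: "nat \<Rightarrow> (nat \<Rightarrow> nat \<Rightarrow> bool) \<Rightarrow> bool" where
  "simple_graph n E \<longleftrightarrow>
     (\<forall>u v. E u v \<longrightarrow> E v u) \<and> (\<forall>v. \<not> E v v) \<and>
     (\<forall>u v. E u v \<longrightarrow> u \<in> {1..n} \<and> v \<in> {1..n})"

definition reach_in :: "(nat \<Rightarrow> nat \<Rightarrow> bool) \<Rightarrow> nat set \<Rightarrow> nat \<Rightarrow> nat \<Rightarrow> bool" where
  "reach_in E S u v \<longleftrightarrow> u \<in> S \<and> (\<lambda>x y. E x y \<and> x \<in> S \<and> y \<in> S)\<^sup>*\<^sup>* u v"

definition components :: "(nat \<Rightarrow> nat \<Rightarrow> bool) \<Rightarrow> nat set \<Rightarrow> nat set set" where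
  "components E S = (\<lambda>u. {v. reach_in E S u v}) ` S"

definition ncomp :: "(nat \<Rightarrow> nat \<Rightarrow> bool) \<Rightarrow> nat set \<Rightarrow> nat" where
  "ncomp E S = card (components E S)"

definition cG :: "nat \<Rightarrow> (nat \<Rightarrow> nat \<Rightarrow> bool) \<Rightarrow> nat set \<Rightarrow> nat" where
  "cG n E T = ncomp E ({1..n} - T)"

definition cut_set :: "nat \<Rightarrow> (nat \<Rightarrow> nat \<Rightarrow> bool) \<Rightarrow> nat set \<Rightarrow> bool" where
  "cut_set n E T \<longleftrightarrow> T \<subseteq> {1..n} \<and> cG n E T > ncomp E {1..n}"

definition minimal_cut_set :: "nat \<Rightarrow> (nat \<Rightarrow> nat \<Rightarrow> bool) \<Rightarrow> nat set \<Rightarrow> bool" where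
  "minimal_cut_set n E T \<longleftrightarrow> cut_set n E T \<and> (\<forall>T'. T' \<subset> T \<longrightarrow> \<not> cut_set n E T')"

definition cut_vertex :: "(nat \<Rightarrow> nat \<Rightarrow> bool) \<Rightarrow> nat set \<Rightarrow> nat \<Rightarrow> bool" where
  "cut_vertex E S v \<longleftrightarrow> v \<in> S \<and> ncomp E (S - {v}) > ncomp E S"

definition cut_point_property :: "nat \<Rightarrow> (nat \<Rightarrow> nat \<Rightarrow> bool) \<Rightarrow> nat set \<Rightarrow> bool" where
  "cut_point_property n E T \<longleftrightarrow>
     T \<subseteq> {1..n} \<and> (\<forall>i\<in>T. cut_vertex E (({1..n} - T) \<union> {i}) i)"

definition CG :: "nat \<Rightarrow> (nat \<Rightarrow> nat \<Rightarrow> bool) \<Rightarrow> nat set set" where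
  "CG n E = {{}} \<union> {T. cut_point_property n E T}"

definition clique :: "nat \<Rightarrow> (nat \<Rightarrow> nat \<Rightarrow> bool) \<Rightarrow> nat set \<Rightarrow> bool" where
  "clique n E S \<longleftrightarrow> S \<subseteq> {1..n} \<and> (\<forall>x\<in>S. \<forall>y\<in>S. x \<noteq> y \<longrightarrow> E x y)"

text \<open>Facets of the clique complex = maximal cliques.\<close>
definition facet :: "nat \<Rightarrow> (nat \<Rightarrow> nat \<Rightarrow> bool) \<Rightarrow> nat set \<Rightarrow> bool" where
  "facet n E F \<longleftrightarrow> clique n E F \<and> (\<forall>S. clique n E S \<longrightarrow> F \<subseteq> S \<longrightarrow> S = F)"

definition chordal :: "nat \<Rightarrow> (nat \<Rightarrow> nat \<Rightarrow> bool) \<Rightarrow> bool" where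
  "chordal n E \<longleftrightarrow>
     (\<forall>vs. distinct vs \<and> length vs \<ge> 4 \<and> set vs \<subseteq> {1..n} \<and>
        (\<forall>i < length vs. E (vs ! i) (vs ! ((i + 1) mod length vs))) \<longrightarrow>
        (\<exists>i < length vs. \<exists>j < length vs. i \<noteq> j \<and>
            j \<noteq> (i + 1) mod length vs \<and> i \<noteq> (j + 1) mod length vs \<and>
            E (vs ! i) (vs ! j)))"

text \<open>Generalized block graph (facets F_i, F_j, F_k taken pairwise distinct).\<close>
definition generalized_block_graph :: "nat \<Rightarrow> (nat \<Rightarrow> nat \<Rightarrow> bool) \<Rightarrow> bool" where
  "generalized_block_graph n E \<longleftrightarrow> chordal n E \<and>
     (\<forall>Fi Fj Fk. facet n E Fi \<and> facet n E Fj \<and> facet n E Fk \<and>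
        Fi \<noteq> Fj \<and> Fi \<noteq> Fk \<and> Fj \<noteq> Fk \<and> Fi \<inter> Fj \<inter> Fk \<noteq> {} \<longrightarrow>
        Fi \<inter> Fj = Fi \<inter> Fk \<and> Fi \<inter> Fk = Fj \<inter> Fk)"

end

theory Submission
  imports Defs
begin

fun ip :: "('a \<Rightarrow> 'a \<Rightarrow> bool) \<Rightarrow> 'a list \<Rightarrow> bool" where
  "ip R [] = True"
| "ip R (x # ys) = (x \<notin> set ys \<and> (ys \<noteq> [] \<longrightarrow> R x (hd ys)) \<and> (\<forall>z\<in>set (tl ys). \<not> R x z) \<and> ip R ys)"

lemma ip_append:
  "ip R (xs @ ys) \<longleftrightarrow> ip R xs \<and> ip R ys \<and> set xs \<inter> set ys = {} \<and>
     (xs \<noteq> [] \<longrightarrow> ys \<noteq> [] \<longrightarrow> R (last xs) (hd ys)) \<and>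
     (\<forall>a\<in>set xs. \<forall>b\<in>set ys. R a b \<longrightarrow> a = last xs \<and> b = hd ys)"
proof (induction xs)
  case Nil
  then show ?case by simp
next
  case (Cons x xs)
  show ?case
  proof (cases xs)
    case Nil
    show ?thesis
    proof (cases ys)
      case Nil
      then show ?thesis using \<open>xs = []\<close> by simp
    next
      case (Cons y ys')
      then show ?thesis using \<open>xs = []\<close> by auto
    qed
  next
    case (Cons y zs)
    have e1: "ip R ((x # xs) @ ys) = (x \<notin> set xs \<and> x \<notin> set ys \<and> R x y \<and> (\<forall>z\<in>set zs. \<not> R x z)
       \<and> (\<forall>z\<in>set ys. \<not> R x z) \<and> ip R (xs @ ys))" using Cons by auto
    have e2: "ip R (x # xs) = (x \<notin> set xs \<and> R x y \<and> (\<forall>z\<in>set zs. \<not> R x z) \<and> ip R xs)" using Cons by auto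
    have e3: "last (x # xs) = last xs" "set (x # xs) = insert x (set xs)" using Cons by auto
    have e4: "x \<noteq> last xs" if "x \<notin> set xs" using that Cons by auto
    have e5: "last xs \<in> set zs" if "x \<noteq> last xs" "last xs \<noteq> y" using that Cons by (metis last.simps last_in_set list.distinct(1) set_ConsD)
    show ?thesis unfolding e1 e2 e3 Cons.IH
      apply (intro iffI)
      subgoal using Cons by auto
      subgoal using e4 e5 Cons by (simp add: disjoint_iff)
      done
  qed
qed
lemma ip_cong: "ip R xs \<Longrightarrow> (\<forall>a\<in>set xs. \<forall>b\<in>set xs. R a b \<longleftrightarrow> Q a b) \<Longrightarrow> ip Q xs"
proof (induction xs)
  case Nil
  then show ?case by simp
next
  case (Cons x xs)
  then show ?case by (cases xs) auto
qed

lemma ip_distinct: "ip R xs \<Longrightarrow> distinct xs"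
  by (induction xs) auto

lemma ip_nth_succ: "ip R xs \<Longrightarrow> Suc a < length xs \<Longrightarrow> R (xs ! a) (xs ! Suc a)"
proof (induction xs arbitrary: a)
  case Nil
  then show ?case by simp
next
  case (Cons x xs)
  then show ?case by (cases a) (auto simp: hd_conv_nth)
qed

lemma ip_nth: "ip R xs \<Longrightarrow> a < b \<Longrightarrow> b < length xs \<Longrightarrow> R (xs ! a) (xs ! b) \<Longrightarrow> b = Suc a"
proof (induction xs arbitrary: a b)
  case Nil
  then show ?case by simp
next
  case (Cons x xs)
  obtain b' where b': "b = Suc b'" using Cons.prems(2) by (cases b) auto
  show ?case
  proof (cases a)
    case 0
    show ?thesis
    proof (cases b')
      case 0
      then show ?thesis using b' \<open>a = 0\<close> by simp
    next
      case (Suc c)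
      have c: "c < length (tl xs)" using Cons.prems(3) b' Suc by simp
      have "xs ! b' = tl xs ! c" using c Suc by (simp add: nth_tl)
      then have "xs ! b' \<in> set (tl xs)" using c by simp
      moreover have "R x (xs ! b')" using Cons.prems(4) b' \<open>a = 0\<close> by simp
      ultimately show ?thesis using Cons.prems(1) by auto
    qed
  next
    case (Suc a')
    have "ip R xs" using Cons.prems(1) by simp
    moreover have "a' < b'" "b' < length xs" "R (xs ! a') (xs ! b')" using Cons.prems b' Suc by auto
    ultimately have "b' = Suc a'" using Cons.IH by blast
    then show ?thesis using b' Suc by simp
  qed
qed

lemma ip_shorter:
  "successively R ws \<Longrightarrow> \<not> ip R ws \<Longrightarrow> \<exists>ws'. ws' \<noteq> [] \<and> length ws' < length ws \<and> hd ws' = hd ws \<and>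
      last ws' = last ws \<and> set ws' \<subseteq> set ws \<and> successively R ws'"
proof (induction ws)
  case Nil
  then show ?case by simp
next
  case (Cons x ys)
  have ysne: "ys \<noteq> []" using Cons.prems by auto
  have sys: "successively R ys" and hx: "R x (hd ys)" using Cons.prems ysne by (auto simp: successively_Cons)
  consider "\<not> ip R ys" | "x \<in> set ys" | "\<exists>z\<in>set (tl ys). R x z" using Cons.prems ysne hx by auto
  then show ?case
  proof cases
    case 1
    then obtain ws' where w: "ws' \<noteq> []" "length ws' < length ys" "hd ws' = hd ys"
      "last ws' = last ys" "set ws' \<subseteq> set ys" "successively R ws'" using Cons.IH sys by blast
    have "successively R (x # ws')" using w hx by (simp add: successively_Cons)
    moreover have "last (x # ws') = last (x # ys)" using w ysne by simp
    ultimately show ?thesis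
      using w by (intro exI[of _ "x # ws'"]) auto
  next
    case 2
    then obtain p q where pq: "ys = p @ x # q" by (meson split_list)
    have "successively R (x # q)" using sys pq by (simp add: successively_append_iff)
    moreover have "last (x # q) = last (x # ys)" using pq by simp
    moreover have "set (x # q) \<subseteq> set (x # ys)" using pq by auto
    moreover have "length (x # q) < length (x # ys)" using pq by simp
    ultimately show ?thesis by (intro exI[of _ "x # q"]) auto
  next
    case 3
    then obtain z where z: "z \<in> set (tl ys)" "R x z" by blast
    then obtain p q where pq: "tl ys = p @ z # q" by (meson split_list)
    have ys: "ys = hd ys # p @ z # q" using pq ysne by (metis list.collapse)
    have "successively R ((hd ys # p) @ z # q)" using sys ys by simp
    then have "successively R (z # q)" by (simp only: successively_append_iff)
    then have "successively R (x # z # q)" using z by (simp add: successively_Cons)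
    moreover have "last (x # z # q) = last (x # ys)" using ys
      by (metis append_Cons last_ConsR last_appendR list.distinct(1))
    moreover have "set (x # z # q) \<subseteq> set (x # ys)" using ys
      by (metis Un_upper2 append_Cons set_append set_subset_Cons subset_trans insert_mono list.set(2))
    moreover have "length (x # z # q) < length (x # ys)" using ys
      by (metis append_Cons length_Cons length_append less_Suc_eq_le le_add2 Suc_le_mono)
    ultimately show ?thesis by (intro exI[of _ "x # z # q"]) auto
  qed
qed

lemma ip_shorten:
  "successively R ws \<Longrightarrow> ws \<noteq> [] \<Longrightarrow> \<exists>ws'. ws' \<noteq> [] \<and> hd ws' = hd ws \<and>
      last ws' = last ws \<and> set ws' \<subseteq> set ws \<and> ip R ws'"
proof (induction "length ws" arbitrary: ws rule: less_induct)
  case less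
  show ?case
  proof (cases "ip R ws")
    case True
    then show ?thesis using less.prems by blast
  next
    case False
    then obtain ws' where w: "ws' \<noteq> []" "length ws' < length ws" "hd ws' = hd ws"
      "last ws' = last ws" "set ws' \<subseteq> set ws" "successively R ws'"
      using ip_shorter less.prems by blast
    then obtain ws'' where "ws'' \<noteq> [] \<and> hd ws'' = hd ws' \<and>
      last ws'' = last ws' \<and> set ws'' \<subseteq> set ws' \<and> ip R ws''" using less.hyps by blast
    then show ?thesis using w by auto
  qed
qed

lemma cycle_false:
  assumes ch: "chordal n E" and sym: "\<forall>u v. E u v \<longrightarrow> E v u"
    and ipy: "ip E ys" and len: "length ys \<ge> 3" and x: "x \<notin> set ys"
    and h: "E x (hd ys)" and l: "E x (last ys)"
    and only: "\<forall>z\<in>set ys. E x z \<longrightarrow> z = hd ys \<or> z = last ys"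
    and sub: "set (x # ys) \<subseteq> {1..n}"
  shows False
proof -
  define vs where "vs = x # ys"
  define L where "L = length vs"
  have L: "L = Suc (length ys)" unfolding L_def vs_def by simp
  have dys: "distinct ys" using ipy ip_distinct by blast
  have dist: "distinct vs" unfolding vs_def using dys x by simp
  have ysne: "ys \<noteq> []" using len by auto
  have adj: "E (vs ! i) (vs ! ((i + 1) mod L))" if i: "i < L" for i
  proof (cases "Suc i < L")
    case True
    then have m: "(i + 1) mod L = Suc i" by simp
    show ?thesis
    proof (cases i)
      case 0
      then show ?thesis using m h ysne unfolding vs_def by (simp add: hd_conv_nth)
    next
      case (Suc k)
      have "Suc k < length ys" using True Suc L by simp
      then have "E (ys ! k) (ys ! Suc k)" using ip_nth_succ ipy by blast
      then show ?thesis using m Suc unfolding vs_def by simp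
    qed
  next
    case False
    then have ii: "i = length ys" using i L by simp
    then have m: "(i + 1) mod L = 0" using L by simp
    have "vs ! i = last ys" using ii ysne unfolding vs_def by (simp add: last_conv_nth)
    then show ?thesis using m l sym unfolding vs_def by simp
  qed
  have nochord: "j = Suc i \<or> (i = 0 \<and> j = L - 1)"
    if ij: "i < j" "j < L" "E (vs ! i) (vs ! j)" for i j
  proof -
    obtain k where k: "j = Suc k" using ij by (cases j) auto
    have kl: "k < length ys" using k ij L by simp
    have vj: "vs ! j = ys ! k" using k unfolding vs_def by simp
    show ?thesis
    proof (cases i)
      case 0
      then have "E x (ys ! k)" using ij vj unfolding vs_def by simp
      then have "ys ! k = hd ys \<or> ys ! k = last ys" using only kl by simp
      then have "ys ! k = ys ! 0 \<or> ys ! k = ys ! (length ys - 1)"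
        using ysne by (simp add: hd_conv_nth last_conv_nth)
      then have "k = 0 \<or> k = length ys - 1" using dys kl ysne
        by (metis diff_less length_greater_0_conv nth_eq_iff_index_eq zero_less_one)
      then show ?thesis using k 0 L ysne by auto
    next
      case (Suc k')
      have "E (ys ! k') (ys ! k)" using ij vj Suc unfolding vs_def by simp
      moreover have "k' < k" using Suc k ij by simp
      ultimately have "k = Suc k'" using ip_nth ipy kl by blast
      then show ?thesis using Suc k by simp
    qed
  qed
  have "distinct vs \<and> length vs \<ge> 4 \<and> set vs \<subseteq> {1..n} \<and>
        (\<forall>i < length vs. E (vs ! i) (vs ! ((i + 1) mod length vs)))"
    using dist len sub adj L_def unfolding vs_def by auto
  then obtain i j where ij: "i < length vs" "j < length vs" "i \<noteq> j"
    "j \<noteq> (i + 1) mod length vs" "i \<noteq> (j + 1) mod length vs" "E (vs ! i) (vs ! j)"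
    using ch unfolding chordal_def by blast
  have L4: "L \<ge> 4" using L len by simp
  show False
  proof (cases "i < j")
    case True
    from nochord[OF True] ij L_def have "j = Suc i \<or> (i = 0 \<and> j = L - 1)" by simp
    then show False
    proof
      assume "j = Suc i" then show False using ij L_def by simp
    next
      assume "i = 0 \<and> j = L - 1" then show False using ij L_def L4 by simp
    qed
  next
    case False
    then have ji: "j < i" using ij by simp
    have "E (vs ! j) (vs ! i)" using ij sym by blast
    from nochord[OF ji] ij L_def this have "i = Suc j \<or> (j = 0 \<and> i = L - 1)" by simp
    then show False
    proof
      assume "i = Suc j" then show False using ij L_def by simp
    next
      assume "j = 0 \<and> i = L - 1" then show False using ij L_def L4 by simp
    qed
  qed
qed

lemma dbl1: "x \<notin> {a, b} \<Longrightarrow> {x, y} \<noteq> {a, b}"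
proof
  assume "x \<notin> {a, b}" "{x, y} = {a, b}"
  moreover have "x \<in> {x, y}" by simp
  ultimately show False by simp
qed
lemma dbl2: "y \<notin> {a, b} \<Longrightarrow> {x, y} \<noteq> {a, b}"
proof
  assume "y \<notin> {a, b}" "{x, y} = {a, b}"
  moreover have "y \<in> {x, y}" by simp
  ultimately show False by simp
qed

lemma path_in:
  assumes R: "\<And>x y. R x y = (E x y \<and> {x, y} \<noteq> {a, b})"
    and ab: "a \<noteq> b" "a \<notin> C" "b \<notin> C"
    and P: "P \<noteq> []" "set P \<subseteq> C" "successively E (a # P @ [b])"
  shows "\<exists>Q. Q \<noteq> [] \<and> set Q \<subseteq> C \<and> ip R (a # Q @ [b])"
proof -
  have sP: "successively E P" and ah: "E a (hd P)" and lb: "E (last P) b"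
    using P by (auto simp: successively_append_iff successively_Cons)
  have "hd P \<in> C" "last P \<in> C" using P by auto
  then have nab: "hd P \<notin> {a, b}" "last P \<notin> {a, b}" using ab by auto
  have sR: "successively R P"
    using sP
  proof (rule successively_mono)
    fix x y assume "x \<in> set P" "y \<in> set P" "E x y"
    then have "x \<in> C" using P by auto
    then have "x \<notin> {a, b}" using ab by auto
    then have "{x, y} \<noteq> {a, b}" by (rule dbl1)
    then show "R x y" using R \<open>E x y\<close> by simp
  qed
  have "{a, hd P} \<noteq> {a, b}" using nab(1) by (rule dbl2)
  moreover have "{last P, b} \<noteq> {a, b}" using nab(2) by (rule dbl1)
  ultimately have "R a (hd P)" "R (last P) b" using R ah lb by simp_all
  then have "successively R (a # P @ [b])" using sR P
    by (auto simp: successively_append_iff successively_Cons)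
  from ip_shorten[OF this] obtain W where W0: "W \<noteq> []" "hd W = hd (a # P @ [b])" "last W = last (a # P @ [b])"
     "set W \<subseteq> set (a # P @ [b])" "ip R W" by blast
  then have W: "W \<noteq> []" "hd W = a" "last W = b" "set W \<subseteq> set (a # P @ [b])" "ip R W" by simp_all
  obtain rest where Wr: "W = a # rest" using W(1,2) by (cases W) auto
  have "rest \<noteq> []" using Wr W ab by auto
  moreover have "last rest = b" using W Wr \<open>rest \<noteq> []\<close> by simp
  ultimately have rQ: "rest = butlast rest @ [b]" using append_butlast_last_id[of rest] by simp
  define Q where "Q = butlast rest"
  have WQ: "W = a # Q @ [b]" using Wr rQ Q_def by simp
  have ipW: "ip R (a # Q @ [b])" using W(5) WQ by simp
  have "\<not> R a b" using R by simp
  have Qne: "Q \<noteq> []"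
  proof
    assume "Q = []"
    then have "R a b" using ipW by simp
    then show False using \<open>\<not> R a b\<close> by simp
  qed
  have dW: "distinct (a # Q @ [b])" using ipW ip_distinct by blast
  have "set Q \<subseteq> C"
  proof
    fix z assume z: "z \<in> set Q"
    have "z \<noteq> a" "z \<noteq> b" using dW z by auto
    moreover have "z \<in> set W" using WQ z by simp
    then have "z \<in> set (a # P @ [b])" using W(4) by blast
    ultimately show "z \<in> C" using P(2) by auto
  qed
  then show ?thesis using Qne ipW by blast
qed

lemma ip_first: "ip R (x # ys) \<Longrightarrow> z \<in> set ys \<Longrightarrow> R x z \<Longrightarrow> z = hd ys"
  using ip_append[of R "[x]" ys] by simp

lemma ip_lastE: "ip R (xs @ [y]) \<Longrightarrow> z \<in> set xs \<Longrightarrow> R z y \<Longrightarrow> z = last xs"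
  using ip_append[of R xs "[y]"] by simp

lemma ip_last: "ip R (xs @ [y]) \<Longrightarrow> xs \<noteq> [] \<Longrightarrow> R (last xs) y"
  using ip_append[of R xs "[y]"] by simp

lemma key:
  assumes ch: "chordal n E" and sym: "\<forall>u v. E u v \<longrightarrow> E v u"
    and ij: "i \<noteq> j" and disj: "C1 \<inter> C2 = {}"
    and nin: "i \<notin> C1" "i \<notin> C2" "j \<notin> C1" "j \<notin> C2"
    and noe: "\<forall>a\<in>C1. \<forall>b\<in>C2. \<not> E a b"
    and sub: "C1 \<subseteq> {1..n}" "C2 \<subseteq> {1..n}" "i \<in> {1..n}" "j \<in> {1..n}"
    and P1: "P1 \<noteq> []" "set P1 \<subseteq> C1" "successively E (i # P1 @ [j])"
    and P2: "P2 \<noteq> []" "set P2 \<subseteq> C2" "successively E (j # P2 @ [i])"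
  shows "E i j \<and> (\<exists>x\<in>C1. E i x \<and> E x j)"
proof -
  define R where "R = (\<lambda>x y. E x y \<and> {x, y} \<noteq> {i, j})"
  have R1: "\<And>x y. R x y = (E x y \<and> {x, y} \<noteq> {i, j})" unfolding R_def by simp
  have R2: "\<And>x y. R x y = (E x y \<and> {x, y} \<noteq> {j, i})" unfolding R_def by (simp add: insert_commute)
  obtain Q1 where Q1: "Q1 \<noteq> []" "set Q1 \<subseteq> C1" "ip R (i # Q1 @ [j])"
    using path_in[OF R1 ij nin(1) nin(3) P1] by blast
  obtain Q2 where Q2: "Q2 \<noteq> []" "set Q2 \<subseteq> C2" "ip R (j # Q2 @ [i])"
    using path_in[OF R2 ij[symmetric] nin(4) nin(2) P2] by blast
  have RE: "R x y \<Longrightarrow> E x y" for x y unfolding R_def by simp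
  have F1: "R i (hd Q1)" using Q1(1,3) by (cases Q1) auto
  have F2: "z = hd Q1" if "z \<in> set Q1" "R i z" for z
  proof -
    have "z = hd (Q1 @ [j])" using ip_first[OF Q1(3)] that by simp
    then show ?thesis using Q1(1) by simp
  qed
  have F3: "R (last Q1) j" using ip_last[of R "i # Q1" j] Q1 by simp
  have F4: "z = last Q1" if "z \<in> set Q1" "R z j" for z
  proof -
    have "z = last (i # Q1)" using ip_lastE[of R "i # Q1" j z] Q1(3) that by simp
    then show ?thesis using Q1(1) by simp
  qed
  have F5: "ip R (i # Q1)" "ip R (Q1 @ [j])"
    using Q1(3) ip_append[of R "i # Q1" "[j]"] by simp_all
  have G1: "R j (hd Q2)" using Q2(1,3) by (cases Q2) auto
  have G3: "R (last Q2) i" using ip_last[of R "j # Q2" i] Q2 by simp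
  have G4: "z = last Q2" if "z \<in> set Q2" "R z i" for z
  proof -
    have "z = last (j # Q2)" using ip_lastE[of R "j # Q2" i z] Q2(3) that by simp
    then show ?thesis using Q2(1) by simp
  qed
  have G5: "ip R (j # Q2)"
    using Q2(3) ip_append[of R "j # Q2" "[i]"] by simp
  have Eij: "E i j"
  proof (rule ccontr)
    assume nE: "\<not> E i j"
    then have nE': "\<not> E j i" using sym by blast
    have RisE: "R = E"
    proof (intro ext)
      fix x y show "R x y = E x y"
        unfolding R_def using nE nE' by (auto simp: doubleton_eq_iff)
    qed
    define ys where "ys = Q1 @ j # Q2"
    have ip1: "ip E Q1" using F5(2) RisE ip_append[of R Q1 "[j]"] by simp
    have ip2: "ip E (j # Q2)" using G5 RisE by simp
    have dsj: "set Q1 \<inter> set (j # Q2) = {}" using Q1(2) Q2(2) disj nin(3) by auto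
    have cross: "\<forall>a\<in>set Q1. \<forall>b\<in>set (j # Q2). E a b \<longrightarrow> a = last Q1 \<and> b = hd (j # Q2)"
    proof (intro ballI impI)
      fix a b assume a: "a \<in> set Q1" and b: "b \<in> set (j # Q2)" and e: "E a b"
      have "b \<notin> set Q2" using a e noe Q1(2) Q2(2) by blast
      then have "b = j" using b by simp
      then show "a = last Q1 \<and> b = hd (j # Q2)" using F4[OF a] e RisE by simp
    qed
    have "ip E ys" unfolding ys_def
      using ip_append[of E Q1 "j # Q2"] ip1 ip2 dsj cross F3 RisE by simp
    moreover have "length ys \<ge> 3" unfolding ys_def using Q1(1) Q2(1) by (cases Q1; cases Q2) auto
    moreover have "i \<notin> set ys" unfolding ys_def using Q1(2) Q2(2) nin ij by auto
    moreover have "hd ys = hd Q1" unfolding ys_def using Q1(1) by simp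
    moreover have "last ys = last Q2" unfolding ys_def using Q2(1) by simp
    moreover have "E i (hd Q1)" using F1 RE by simp
    moreover have "E i (last Q2)" using G3 RE sym by blast
    moreover have "\<forall>z\<in>set ys. E i z \<longrightarrow> z = hd Q1 \<or> z = last Q2"
    proof (intro ballI impI)
      fix z assume z: "z \<in> set ys" and e: "E i z"
      have "z \<in> set Q1 \<or> z = j \<or> z \<in> set Q2" using z unfolding ys_def by auto
      then show "z = hd Q1 \<or> z = last Q2"
      proof (elim disjE)
        assume "z \<in> set Q1" then show ?thesis using F2 e RisE by simp
      next
        assume "z = j" then show ?thesis using e nE by simp
      next
        assume zq: "z \<in> set Q2"
        have "E z i" using e sym by blast
        then show ?thesis using G4[OF zq] RisE by simp
      qed
    qed
    moreover have "set (i # ys) \<subseteq> {1..n}" unfolding ys_def using Q1(2) Q2(2) sub by auto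
    ultimately show False using cycle_false[OF ch sym, of ys i] by simp
  qed
  have len1: "length Q1 = 1"
  proof (rule ccontr)
    assume "length Q1 \<noteq> 1"
    moreover have "length Q1 \<noteq> 0" using Q1(1) by simp
    ultimately have "length Q1 \<ge> 2" by presburger
    then have l2: "length (i # Q1) \<ge> 3" by simp
    have RE2: "R a b = E a b" if "a \<in> set (i # Q1)" "b \<in> set (i # Q1)" for a b
    proof -
      have "a \<noteq> j" "b \<noteq> j" using that Q1(2) nin(3) ij by auto
      then have "{a, b} \<noteq> {i, j}" by (auto simp: doubleton_eq_iff)
      then show ?thesis unfolding R_def by simp
    qed
    have "ip E (i # Q1)" using ip_cong[OF F5(1)] RE2 by blast
    moreover have "j \<notin> set (i # Q1)" using Q1(2) nin(3) ij by auto
    moreover have "E j (hd (i # Q1))" using Eij sym by simp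
    moreover have "E j (last (i # Q1))" using F3 RE sym Q1(1) by simp
    moreover have "\<forall>z\<in>set (i # Q1). E j z \<longrightarrow> z = hd (i # Q1) \<or> z = last (i # Q1)"
    proof (intro ballI impI)
      fix z assume z: "z \<in> set (i # Q1)" and e: "E j z"
      show "z = hd (i # Q1) \<or> z = last (i # Q1)"
      proof (cases "z = i")
        case True then show ?thesis by simp
      next
        case False
        then have zq: "z \<in> set Q1" using z by simp
        have "R z j" using RE2 e sym zq Q1(2) nin(3) False unfolding R_def
          by (auto simp: doubleton_eq_iff)
        then show ?thesis using F4[OF zq] Q1(1) by simp
      qed
    qed
    moreover have "set (j # i # Q1) \<subseteq> {1..n}" using Q1(2) sub by auto
    ultimately show False using cycle_false[OF ch sym, of "i # Q1" j] l2 by simp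
  qed
  then obtain x where "Q1 = [x]" by (cases Q1) auto
  then have "x \<in> C1" "E i x" "E x j" using Q1(2) F1 F3 RE by auto
  then show ?thesis using Eij by blast
qed

definition relX :: "(nat \<Rightarrow> nat \<Rightarrow> bool) \<Rightarrow> nat set \<Rightarrow> nat \<Rightarrow> nat \<Rightarrow> bool" where
  "relX E X x y \<longleftrightarrow> E x y \<and> x \<in> X \<and> y \<in> X"

lemma reach_alt: "reach_in E X u v \<longleftrightarrow> u \<in> X \<and> (relX E X)\<^sup>*\<^sup>* u v"
proof -
  have "relX E X = (\<lambda>x y. E x y \<and> x \<in> X \<and> y \<in> X)" by (intro ext) (simp add: relX_def)
  then show ?thesis unfolding reach_in_def by simp
qed

lemma reach_refl: "u \<in> X \<Longrightarrow> reach_in E X u u"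
  unfolding reach_alt by simp

lemma reach_mem: "reach_in E X u v \<Longrightarrow> v \<in> X"
proof -
  assume "reach_in E X u v"
  then have u: "u \<in> X" and rt: "(relX E X)\<^sup>*\<^sup>* u v" unfolding reach_alt by auto
  from rt show "v \<in> X" 
  proof (induction rule: rtranclp_induct)
    case base then show ?case using u .
  next
    case (step y z) then show ?case by (simp add: relX_def)
  qed
qed

lemma reach_trans: "reach_in E X u v \<Longrightarrow> reach_in E X v w \<Longrightarrow> reach_in E X u w"
  unfolding reach_alt by (meson rtranclp_trans)

lemma reach_step: "reach_in E X u v \<Longrightarrow> E v w \<Longrightarrow> w \<in> X \<Longrightarrow> reach_in E X u w"
proof -
  assume a: "reach_in E X u v" "E v w" "w \<in> X"
  have "v \<in> X" using a(1) by (rule reach_mem)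
  then have "relX E X v w" using a by (simp add: relX_def)
  then show ?thesis using a(1) unfolding reach_alt
    using rtranclp.rtrancl_into_rtrancl by metis
qed

lemma reach_sym:
  assumes sym: "\<forall>u v. E u v \<longrightarrow> E v u" and r: "reach_in E X u v"
  shows "reach_in E X v u"
proof -
  have u: "u \<in> X" and rt: "(relX E X)\<^sup>*\<^sup>* u v" using r unfolding reach_alt by auto
  from rt have "(relX E X)\<^sup>*\<^sup>* v u"
  proof (induction rule: rtranclp_induct)
    case base
    then show ?case by simp
  next
    case (step y z)
    then have "relX E X z y" using sym by (auto simp: relX_def)
    then show ?case using step.IH by (meson converse_rtranclp_into_rtranclp)
  qed
  moreover have "v \<in> X" using r by (rule reach_mem)
  ultimately show ?thesis unfolding reach_alt by simp
qed

lemma reach_mono: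
  assumes "X \<subseteq> Y" and r: "reach_in E X u v"
  shows "reach_in E Y u v"
proof -
  have u: "u \<in> X" and rt: "(relX E X)\<^sup>*\<^sup>* u v" using r unfolding reach_alt by auto
  from rt have "(relX E Y)\<^sup>*\<^sup>* u v"
  proof (induction rule: rtranclp_induct)
    case base
    then show ?case by simp
  next
    case (step y z)
    then have "relX E Y y z" using assms(1) by (auto simp: relX_def)
    then show ?case using step.IH by (meson rtranclp.rtrancl_into_rtrancl)
  qed
  then show ?thesis using u assms(1) unfolding reach_alt by auto
qed

lemma reach_closed:
  assumes c: "c \<in> C" and cl: "\<forall>v\<in>C. \<forall>w\<in>Z. E v w \<longrightarrow> w \<in> C" and r: "reach_in E Z c v"
  shows "reach_in E C c v"
proof -
  have rt: "(relX E Z)\<^sup>*\<^sup>* c v" using r unfolding reach_alt by auto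
  from rt show ?thesis
  proof (induction rule: rtranclp_induct)
    case base
    then show ?case using c by (rule reach_refl)
  next
    case (step y z)
    have "y \<in> C" using step.IH by (rule reach_mem)
    then have "z \<in> C" using cl step.hyps(2) by (auto simp: relX_def)
    then show ?case using step.IH step.hyps(2) reach_step by (auto simp: relX_def)
  qed
qed

lemma comp_eq:
  assumes sym: "\<forall>u v. E u v \<longrightarrow> E v u" and r: "reach_in E X u v"
  shows "{w. reach_in E X u w} = {w. reach_in E X v w}"
proof -
  have "reach_in E X v u" using reach_sym[OF sym r] .
  then show ?thesis using r reach_trans by blast
qed

lemma comp_sub: "{w. reach_in E X u w} \<subseteq> X"
  using reach_mem by blast

lemma finite_components: "finite X \<Longrightarrow> finite (components E X)"
  unfolding components_def by simp

lemma reach_split: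
  assumes u: "u \<in> X" and noe: "\<forall>x\<in>X. \<forall>y\<in>Y. \<not> E x y"
  shows "{v. reach_in E (X \<union> Y) u v} = {v. reach_in E X u v}"
proof
  show "{v. reach_in E (X \<union> Y) u v} \<subseteq> {v. reach_in E X u v}"
  proof
    fix v assume "v \<in> {v. reach_in E (X \<union> Y) u v}"
    then have "reach_in E (X \<union> Y) u v" by simp
    moreover have "\<forall>v\<in>X. \<forall>w\<in>X \<union> Y. E v w \<longrightarrow> w \<in> X" using noe by blast
    ultimately show "v \<in> {v. reach_in E X u v}" using reach_closed[OF u] by blast
  qed
next
  show "{v. reach_in E X u v} \<subseteq> {v. reach_in E (X \<union> Y) u v}"
    using reach_mono[of X "X \<union> Y" E u] by blast
qed

lemma ncomp_split:
  assumes sym: "\<forall>u v. E u v \<longrightarrow> E v u" and fin: "finite X" "finite Y" and dj: "X \<inter> Y = {}"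
    and noe: "\<forall>x\<in>X. \<forall>y\<in>Y. \<not> E x y"
  shows "ncomp E (X \<union> Y) = ncomp E X + ncomp E Y"
proof -
  have noe2: "\<forall>y\<in>Y. \<forall>x\<in>X. \<not> E y x" using noe sym by blast
  have e1: "(\<lambda>u. {v. reach_in E (X \<union> Y) u v}) ` X = components E X"
    unfolding components_def using reach_split[OF _ noe] by (intro image_cong) auto
  have e2: "(\<lambda>u. {v. reach_in E (X \<union> Y) u v}) ` Y = components E Y"
    unfolding components_def using reach_split[OF _ noe2] by (intro image_cong) (auto simp: Un_commute)
  have "components E (X \<union> Y) = components E X \<union> components E Y"
    unfolding components_def[of E "X \<union> Y"] image_Un e1 e2 by simp
  moreover have "components E X \<inter> components E Y = {}"
  proof (rule ccontr)
    assume "components E X \<inter> components E Y \<noteq> {}"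
    then obtain u u' where uu: "u \<in> X" "u' \<in> Y" "{v. reach_in E X u v} = {v. reach_in E Y u' v}"
      unfolding components_def by blast
    have "u \<in> {v. reach_in E X u v}" using uu(1) reach_refl by blast
    then have "u \<in> Y" using uu(3) comp_sub by blast
    then show False using uu(1) dj by blast
  qed
  ultimately show ?thesis unfolding ncomp_def
    using card_Un_disjoint finite_components fin by metis
qed

lemma ncomp_single:
  assumes sym: "\<forall>u v. E u v \<longrightarrow> E v u" and u: "u \<in> X" and all: "\<forall>v\<in>X. reach_in E X u v"
  shows "ncomp E X = 1"
proof -
  have "{w. reach_in E X v w} = X" if v: "v \<in> X" for v
  proof -
    have "{w. reach_in E X v w} = {w. reach_in E X u w}" using comp_eq[OF sym all[rule_format, OF v]] by simp
    also have "\<dots> = X" using comp_sub all by blast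
    finally show ?thesis .
  qed
  then have "components E X = {X}" unfolding components_def using u by auto
  then show ?thesis unfolding ncomp_def by simp
qed

lemma walk_exists:
  assumes r: "reach_in E X u v"
  shows "\<exists>ws. ws \<noteq> [] \<and> hd ws = u \<and> last ws = v \<and> successively E ws \<and> (\<forall>w\<in>set ws. reach_in E X u w)"
proof -
  have u: "u \<in> X" and rt: "(relX E X)\<^sup>*\<^sup>* u v" using r unfolding reach_alt by auto
  from rt show ?thesis
  proof (induction rule: rtranclp_induct)
    case base
    then show ?case using u reach_refl by (intro exI[of _ "[u]"]) auto
  next
    case (step y z)
    then obtain ws where ws: "ws \<noteq> []" "hd ws = u" "last ws = y" "successively E ws" "\<forall>w\<in>set ws. reach_in E X u w"
      by blast
    have "reach_in E X u y" using ws by (metis last_in_set)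
    then have rz: "reach_in E X u z" using step.hyps(2) reach_step by (auto simp: relX_def)
    have "successively E (ws @ [z])" using ws step.hyps(2) by (simp add: successively_append_iff relX_def)
    moreover have "hd (ws @ [z]) = u" using ws by simp
    ultimately show ?case using ws rz by (intro exI[of _ "ws @ [z]"]) auto
  qed
qed

lemma reach_add_vertex:
  assumes sym: "\<forall>u v. E u v \<longrightarrow> E v u" and a: "a \<notin> S" and j: "j \<in> S"
    and nb: "\<forall>w\<in>S. E a w \<longrightarrow> reach_in E S j w"
    and u: "u \<in> S" and v: "v \<in> S" and r: "reach_in E (S \<union> {a}) u v"
  shows "reach_in E S u v"
proof -
  have rt: "(relX E (S \<union> {a}))\<^sup>*\<^sup>* u v" using r unfolding reach_alt by auto
  have "(v \<in> S \<and> reach_in E S u v) \<or> (reach_in E S u j \<and> (v = a \<or> reach_in E S j v))"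
    using rt
  proof (induction rule: rtranclp_induct)
    case base
    then show ?case using u reach_refl by blast
  next
    case (step y z)
    have yz: "E y z" "z \<in> S \<union> {a}" using step.hyps(2) by (auto simp: relX_def)
    from step.IH show ?case
    proof (elim disjE conjE)
      assume yS: "y \<in> S" and ry: "reach_in E S u y"
      show ?case
      proof (cases "z = a")
        case True
        then have "E a y" using yz sym by blast
        then have "reach_in E S j y" using nb yS by blast
        then have "reach_in E S u j" using ry reach_sym[OF sym] reach_trans by blast
        then show ?thesis using True by blast
      next
        case False
        then have "z \<in> S" using yz by blast
        then show ?thesis using ry yz reach_step by blast
      qed
    next
      assume uj: "reach_in E S u j" and ya: "y = a"
      show ?case
      proof (cases "z = a")
        case True then show ?thesis using uj by blast
      next
        case False
        then have "z \<in> S" using yz by blast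
        then have "reach_in E S j z" using nb yz ya by blast
        then show ?thesis using uj by blast
      qed
    next
      assume uj: "reach_in E S u j" and jy: "reach_in E S j y"
      show ?case
      proof (cases "z = a")
        case True then show ?thesis using uj by blast
      next
        case False
        then have "z \<in> S" using yz by blast
        then have "reach_in E S j z" using jy yz reach_step by blast
        then show ?thesis using uj by blast
      qed
    qed
  qed
  then show ?thesis using v a reach_trans by blast
qed

lemma facet_exists:
  assumes "clique n E S"
  shows "\<exists>F. facet n E F \<and> S \<subseteq> F"
proof -
  define M where "M = {F. clique n E F \<and> S \<subseteq> F}"
  have "M \<subseteq> Pow {1..n}" unfolding M_def clique_def by blast
  then have "finite M" by (rule finite_subset) simp
  moreover have "M \<noteq> {}" using assms unfolding M_def by blast
  ultimately obtain F where F: "F \<in> M" "\<forall>b\<in>M. F \<le> b \<longrightarrow> F = b" using finite_has_maximal by blast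
  have "facet n E F" unfolding facet_def
  proof (intro conjI allI impI)
    show "clique n E F" using F unfolding M_def by blast
  next
    fix S' assume "clique n E S'" "F \<subseteq> S'"
    then have "S' \<in> M" using F unfolding M_def by blast
    then show "S' = F" using F \<open>F \<subseteq> S'\<close> by blast
  qed
  then show ?thesis using F unfolding M_def by blast
qed

lemma ncomp_add_vertex_le:
  assumes sym: "\<forall>u v. E u v \<longrightarrow> E v u" and fin: "finite S" and a: "a \<notin> S" and j: "j \<in> S"
    and nb: "\<forall>w\<in>S. E a w \<longrightarrow> reach_in E S j w"
  shows "ncomp E S \<le> ncomp E (S \<union> {a})"
proof -
  define f where "f = (\<lambda>C. {v. \<exists>u\<in>C. reach_in E (S \<union> {a}) u v})"
  have fc: "f {w. reach_in E S u w} = {v. reach_in E (S \<union> {a}) u v}" if u: "u \<in> S" for u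
  proof
    show "f {w. reach_in E S u w} \<subseteq> {v. reach_in E (S \<union> {a}) u v}"
    proof
      fix v assume "v \<in> f {w. reach_in E S u w}"
      then obtain u' where u': "reach_in E S u u'" "reach_in E (S \<union> {a}) u' v" unfolding f_def by blast
      have "S \<subseteq> S \<union> {a}" by blast
      from reach_mono[OF this u'(1)] have "reach_in E (S \<union> {a}) u u'" .
      from reach_trans[OF this u'(2)] show "v \<in> {v. reach_in E (S \<union> {a}) u v}" by simp
    qed
  next
    show "{v. reach_in E (S \<union> {a}) u v} \<subseteq> f {w. reach_in E S u w}"
      unfolding f_def using u reach_refl by blast
  qed
  have inj: "inj_on f (components E S)"
  proof (rule inj_onI)
    fix C C' assume C: "C \<in> components E S" and C': "C' \<in> components E S" and eq: "f C = f C'"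
    obtain u where u: "u \<in> S" "C = {w. reach_in E S u w}" using C unfolding components_def by blast
    obtain u' where u': "u' \<in> S" "C' = {w. reach_in E S u' w}" using C' unfolding components_def by blast
    have f1: "f C = {v. reach_in E (S \<union> {a}) u v}" using fc[OF u(1)] u(2) by simp
    have f2: "f C' = {v. reach_in E (S \<union> {a}) u' v}" using fc[OF u'(1)] u'(2) by simp
    have eqs: "{v. reach_in E (S \<union> {a}) u v} = {v. reach_in E (S \<union> {a}) u' v}" using eq f1 f2 by simp
    have "reach_in E (S \<union> {a}) u' u'" using u'(1) reach_refl[of u' "S \<union> {a}" E] by simp
    then have "u' \<in> {v. reach_in E (S \<union> {a}) u v}" using eqs by simp
    then have "reach_in E (S \<union> {a}) u u'" by simp
    then have "reach_in E S u u'" by (rule reach_add_vertex[OF sym a j nb u(1) u'(1)])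
    then have "{w. reach_in E S u w} = {w. reach_in E S u' w}" by (rule comp_eq[OF sym])
    then show "C = C'" using u(2) u'(2) by simp
  qed
  have img: "f ` components E S \<subseteq> components E (S \<union> {a})"
  proof
    fix D assume "D \<in> f ` components E S"
    then obtain C where C: "C \<in> components E S" "D = f C" by (rule imageE) simp
    obtain u where u: "u \<in> S" "C = {w. reach_in E S u w}" using C(1) unfolding components_def by blast
    have "D = {v. reach_in E (S \<union> {a}) u v}" using fc[OF u(1)] C(2) u(2) by simp
    then have "D = (\<lambda>u. {v. reach_in E (S \<union> {a}) u v}) u" by simp
    moreover have "u \<in> S \<union> {a}" using u(1) by simp
    ultimately show "D \<in> components E (S \<union> {a})" unfolding components_def by (rule image_eqI)
  qed
  have fin2: "finite (components E (S \<union> {a}))" using fin finite_components by simp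
  have "card (components E S) \<le> card (components E (S \<union> {a}))" by (rule card_inj_on_le[OF inj img fin2])
  then show ?thesis unfolding ncomp_def .
qed

lemma ncomp_add_isolated_ge2:
  assumes sym: "\<forall>u v. E u v \<longrightarrow> E v u" and fin: "finite X" and a: "a \<notin> X" and c: "c \<in> X"
    and nb: "\<forall>v. reach_in E X c v \<longrightarrow> \<not> E a v"
  shows "2 \<le> ncomp E (X \<union> {a})"
proof -
  define C where "C = {v. reach_in E X c v}"
  have cC: "c \<in> C" unfolding C_def using c reach_refl by blast
  have CX: "C \<subseteq> X" unfolding C_def using comp_sub by blast
  have cl: "\<forall>v\<in>C. \<forall>w\<in>X \<union> {a}. E v w \<longrightarrow> w \<in> C"
  proof (intro ballI impI)
    fix v w assume v: "v \<in> C" and w: "w \<in> X \<union> {a}" and e: "E v w"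
    have rv: "reach_in E X c v" using v unfolding C_def by simp
    have "w \<noteq> a"
    proof
      assume "w = a"
      then have "E a v" using e sym by blast
      then show False using nb rv by blast
    qed
    then have "w \<in> X" using w by blast
    moreover have "reach_in E X c v" using v unfolding C_def by simp
    ultimately have "reach_in E X c w" using reach_step[of E X c v w] e by simp
    then show "w \<in> C" unfolding C_def by simp
  qed
  have eqC: "{v. reach_in E (X \<union> {a}) c v} = C"
  proof
    show "{v. reach_in E (X \<union> {a}) c v} \<subseteq> C"
    proof
      fix v assume "v \<in> {v. reach_in E (X \<union> {a}) c v}"
      then have "reach_in E C c v" using reach_closed[OF cC cl] by blast
      then have "reach_in E X c v" using reach_mono[OF CX] by blast
      then show "v \<in> C" unfolding C_def by blast
    qed
  next
    have "X \<subseteq> X \<union> {a}" by blast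
    then show "C \<subseteq> {v. reach_in E (X \<union> {a}) c v}" unfolding C_def using reach_mono[of X "X \<union> {a}" E c] by blast
  qed
  define D where "D = {v. reach_in E (X \<union> {a}) a v}"
  have "reach_in E (X \<union> {a}) a a" by (rule reach_refl) simp
  then have aD: "a \<in> D" unfolding D_def by simp
  have aC: "a \<notin> C" using CX a by blast
  have DC: "D \<noteq> C" using aD aC by metis
  have "C = (\<lambda>u. {v. reach_in E (X \<union> {a}) u v}) c" using eqC by simp
  moreover have "c \<in> X \<union> {a}" using c by simp
  ultimately have Cin: "C \<in> components E (X \<union> {a})" unfolding components_def by (rule image_eqI)
  have "D = (\<lambda>u. {v. reach_in E (X \<union> {a}) u v}) a" unfolding D_def by simp
  moreover have "a \<in> X \<union> {a}" by simp
  ultimately have Din: "D \<in> components E (X \<union> {a})" unfolding components_def by (rule image_eqI)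
  have sub: "{C, D} \<subseteq> components E (X \<union> {a})" using Cin Din by simp
  have fin2: "finite (components E (X \<union> {a}))" using fin finite_components by simp
  have "card {C, D} \<le> card (components E (X \<union> {a}))" by (rule card_mono[OF fin2 sub])
  moreover have "card {C, D} = 2" using DC by simp
  ultimately show ?thesis unfolding ncomp_def by simp
qed

lemma two_elems: "2 \<le> card S \<Longrightarrow> \<exists>x y. x \<in> S \<and> y \<in> S \<and> x \<noteq> y"
proof -
  assume c: "2 \<le> card S"
  then have "S \<noteq> {}" by auto
  then obtain x where x: "x \<in> S" by blast
  have "finite S" using c by (metis card.infinite not_numeral_le_zero)
  then have "card (S - {x}) \<ge> 1" using c x by simp
  then have "S - {x} \<noteq> {}"
  proof (intro notI)
    assume "card (S - {x}) \<ge> 1" "S - {x} = {}"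
    then show False by simp
  qed
  then obtain y where "y \<in> S - {x}" by blast
  then show ?thesis using x by blast
qed

lemma two_comps:
  assumes sg: "simple_graph n E" and mc: "minimal_cut_set n E A" and i: "i \<in> A" and j: "j \<in> A"
  shows "\<exists>C1 C2. C1 \<inter> C2 = {} \<and> C1 \<subseteq> {1..n} - A \<and> C2 \<subseteq> {1..n} - A \<and>
     (\<forall>a\<in>C1. \<forall>b\<in>C2. \<not> E a b) \<and>
     (\<exists>P1. P1 \<noteq> [] \<and> set P1 \<subseteq> C1 \<and> successively E (i # P1 @ [j])) \<and>
     (\<exists>P2. P2 \<noteq> [] \<and> set P2 \<subseteq> C2 \<and> successively E (j # P2 @ [i]))"
proof -
  define V where "V = {1..n::nat}"
  have sym: "\<forall>u v. E u v \<longrightarrow> E v u" using sg unfolding simple_graph_def by blast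
  have finV: "finite V" unfolding V_def by simp
  have AV: "A \<subseteq> V" and cut: "ncomp E V < ncomp E (V - A)"
    using mc unfolding minimal_cut_set_def cut_set_def cG_def V_def by auto
  have minl: "ncomp E (V - B) \<le> ncomp E V" if "B \<subset> A" for B
  proof -
    have "\<not> cut_set n E B" using mc that unfolding minimal_cut_set_def by blast
    moreover have "B \<subseteq> {1..n}" using that AV V_def by blast
    ultimately show ?thesis unfolding cut_set_def cG_def V_def by simp
  qed
  have iV: "i \<in> V" using i AV by blast
  define K where "K = {v. reach_in E V i v}"
  have KV: "K \<subseteq> V" unfolding K_def using comp_sub by blast
  have iK: "i \<in> K" unfolding K_def using iV reach_refl by blast
  have clK: "\<forall>v\<in>K. \<forall>w\<in>V. E v w \<longrightarrow> w \<in> K"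
  proof (intro ballI impI)
    fix v w assume "v \<in> K" "w \<in> V" "E v w"
    then show "w \<in> K" unfolding K_def using reach_step[of E V i v w] by simp
  qed
  have noe: "\<forall>x\<in>P. \<forall>y\<in>Q. \<not> E x y" if "P \<subseteq> K" "Q \<subseteq> V - K" for P Q
    using clK that by blast
  have fins: "finite P" if "P \<subseteq> V" for P using finV that finite_subset by blast
  have nK: "ncomp E K = 1"
  proof (rule ncomp_single[OF sym iK])
    show "\<forall>v\<in>K. reach_in E K i v"
    proof
      fix v assume "v \<in> K"
      then have "reach_in E V i v" unfolding K_def by simp
      then show "reach_in E K i v" using reach_closed[OF iK clK] by blast
    qed
  qed
  have splitKV: "ncomp E (P \<union> Q) = ncomp E P + ncomp E Q" if "P \<subseteq> K" "Q \<subseteq> V - K" for P Q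
  proof (rule ncomp_split[OF sym])
    show "finite P" using that KV fins by blast
    show "finite Q" using that fins by blast
    show "P \<inter> Q = {}" using that by blast
    show "\<forall>x\<in>P. \<forall>y\<in>Q. \<not> E x y" using noe that by blast
  qed
  have nV: "ncomp E V = 1 + ncomp E (V - K)"
  proof -
    have "V = K \<union> (V - K)" using KV by blast
    then have "ncomp E V = ncomp E (K \<union> (V - K))" by simp
    also have "\<dots> = ncomp E K + ncomp E (V - K)" by (rule splitKV) auto
    finally show ?thesis using nK by simp
  qed
  have AK: "A \<subseteq> K"
  proof (rule ccontr)
    assume "\<not> A \<subseteq> K"
    then obtain a0 where a0: "a0 \<in> A" "a0 \<notin> K" by blast
    have s1: "A \<inter> K \<subset> A" using a0 by blast
    have s2: "A - K \<subset> A" using i iK by blast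
    have e1: "V - (A \<inter> K) = (K - A) \<union> (V - K)" using KV by blast
    have e2: "V - (A - K) = K \<union> ((V - K) - A)" using KV by blast
    have e3: "V - A = (K - A) \<union> ((V - K) - A)" using KV by blast
    have n1: "ncomp E (V - (A \<inter> K)) = ncomp E (K - A) + ncomp E (V - K)"
      unfolding e1 by (rule splitKV) auto
    have n2: "ncomp E (V - (A - K)) = ncomp E K + ncomp E ((V - K) - A)"
      unfolding e2 by (rule splitKV) auto
    have n3: "ncomp E (V - A) = ncomp E (K - A) + ncomp E ((V - K) - A)"
      unfolding e3 by (rule splitKV) auto
    have "ncomp E (V - (A \<inter> K)) \<le> ncomp E V" by (rule minl[OF s1])
    moreover have "ncomp E (V - (A - K)) \<le> ncomp E V" by (rule minl[OF s2])
    ultimately show False using n1 n2 n3 nV nK cut by linarith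
  qed
  define X where "X = K - A"
  have XV: "X \<subseteq> V" unfolding X_def using KV by blast
  have finX: "finite X" using XV fins by blast
  have eA: "V - A = X \<union> (V - K)" unfolding X_def using KV AK by blast
  have nA: "ncomp E (V - A) = ncomp E X + ncomp E (V - K)"
    unfolding eA by (rule splitKV) (auto simp: X_def)
  have nX: "2 \<le> ncomp E X" using nA nV cut by linarith
  have full: "\<exists>v. reach_in E X c v \<and> E a v" if a: "a \<in> A" and c: "c \<in> X" for a c
  proof (rule ccontr)
    assume nn: "\<not> (\<exists>v. reach_in E X c v \<and> E a v)"
    have aX: "a \<notin> X" unfolding X_def using a by blast
    have "2 \<le> ncomp E (X \<union> {a})"
      by (rule ncomp_add_isolated_ge2[OF sym finX aX c]) (use nn in blast)
    moreover have "ncomp E (V - (A - {a})) \<le> ncomp E V" by (rule minl) (use a in blast)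
    moreover have "V - (A - {a}) = (X \<union> {a}) \<union> (V - K)" unfolding X_def using KV AK a AV by blast
    moreover have "ncomp E ((X \<union> {a}) \<union> (V - K)) = ncomp E (X \<union> {a}) + ncomp E (V - K)"
      by (rule splitKV) (use AK a in \<open>auto simp: X_def\<close>)
    ultimately show False using nV by simp
  qed
  obtain C1 C2 where C12: "C1 \<in> components E X" "C2 \<in> components E X" "C1 \<noteq> C2"
    using two_elems[of "components E X"] nX unfolding ncomp_def by blast
  obtain c1 where c1: "c1 \<in> X" "C1 = {v. reach_in E X c1 v}" using C12(1) unfolding components_def by blast
  obtain c2 where c2: "c2 \<in> X" "C2 = {v. reach_in E X c2 v}" using C12(2) unfolding components_def by blast
  have CsubX: "C1 \<subseteq> X" "C2 \<subseteq> X" using c1 c2 comp_sub by blast+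
  have disj: "C1 \<inter> C2 = {}"
  proof (rule ccontr)
    assume "C1 \<inter> C2 \<noteq> {}"
    then obtain v where "reach_in E X c1 v" "reach_in E X c2 v" using c1 c2 by blast
    then have "{w. reach_in E X c1 w} = {w. reach_in E X v w}" "{w. reach_in E X c2 w} = {w. reach_in E X v w}"
      using comp_eq[OF sym] by blast+
    then show False using C12(3) c1 c2 by simp
  qed
  have noe12: "\<forall>a\<in>C1. \<forall>b\<in>C2. \<not> E a b"
  proof (intro ballI notI)
    fix a b assume a: "a \<in> C1" and b: "b \<in> C2" and e: "E a b"
    have "b \<in> X" using b CsubX by blast
    then have "reach_in E X c1 b" using a e c1 reach_step[of E X c1 a b] by simp
    then have "b \<in> C1" using c1 by simp
    then show False using b disj by blast
  qed
  have walk: "\<exists>P. P \<noteq> [] \<and> set P \<subseteq> C \<and> successively E (p # P @ [q])"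
    if C: "C = {v. reach_in E X c v}" and p: "p \<in> A" and q: "q \<in> A" and c: "c \<in> X" for C c p q
  proof -
    obtain u where u: "reach_in E X c u" "E p u" using full[OF p c] by blast
    obtain v where v: "reach_in E X c v" "E q v" using full[OF q c] by blast
    have uv: "reach_in E X u v" using reach_trans[OF reach_sym[OF sym u(1)] v(1)] .
    obtain ws where ws: "ws \<noteq> []" "hd ws = u" "last ws = v" "successively E ws" "\<forall>w\<in>set ws. reach_in E X u w"
      using walk_exists[OF uv] by blast
    have "set ws \<subseteq> C"
    proof
      fix w assume "w \<in> set ws"
      then have "reach_in E X u w" using ws by blast
      then have "reach_in E X c w" using reach_trans[OF u(1)] by blast
      then show "w \<in> C" using C by simp
    qed
    moreover have "successively E (p # ws @ [q])"
      using ws u(2) v(2) sym by (auto simp: successively_append_iff successively_Cons)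
    ultimately show ?thesis using ws(1) by blast
  qed
  have "\<exists>P1. P1 \<noteq> [] \<and> set P1 \<subseteq> C1 \<and> successively E (i # P1 @ [j])" by (rule walk[OF c1(2) i j c1(1)])
  moreover have "\<exists>P2. P2 \<noteq> [] \<and> set P2 \<subseteq> C2 \<and> successively E (j # P2 @ [i])" by (rule walk[OF c2(2) j i c2(1)])
  moreover have "C1 \<subseteq> {1..n} - A" "C2 \<subseteq> {1..n} - A" using CsubX XV unfolding X_def V_def by blast+
  ultimately show ?thesis using disj noe12 by blast
qed

theorem lemma3p1:
  fixes n :: nat and E :: "nat \<Rightarrow> nat \<Rightarrow> bool" and A :: "nat set"
  assumes "simple_graph n E"
    and "minimal_cut_set n E A"
  shows "A \<in> CG n E \<and>
         (generalized_block_graph n E \<longrightarrow> (\<forall>T \<in> CG n E. A \<subseteq> T \<or> A \<inter> T = {}))"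
proof -
  note sg = assms(1) and mc = assms(2)
  define V where "V = {1..n::nat}"
  have sym: "\<forall>u v. E u v \<longrightarrow> E v u" using sg unfolding simple_graph_def by blast
  have irr: "\<forall>v. \<not> E v v" using sg unfolding simple_graph_def by blast
  have inV: "\<forall>u v. E u v \<longrightarrow> u \<in> V \<and> v \<in> V" using sg unfolding simple_graph_def V_def by blast
  have finV: "finite V" unfolding V_def by simp
  have AV: "A \<subseteq> V" and cut: "ncomp E V < ncomp E (V - A)"
    using mc unfolding minimal_cut_set_def cut_set_def cG_def V_def by auto
  have minl: "ncomp E (V - B) \<le> ncomp E V" if "B \<subset> A" for B
  proof -
    have "\<not> cut_set n E B" using mc that unfolding minimal_cut_set_def by blast
    moreover have "B \<subseteq> {1..n}" using that AV V_def by blast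
    ultimately show ?thesis unfolding cut_set_def cG_def V_def by simp
  qed
  have part1: "A \<in> CG n E"
  proof -
    have "cut_vertex E ((V - A) \<union> {i}) i" if i: "i \<in> A" for i
    proof -
      have e1: "(V - A) \<union> {i} - {i} = V - A" using i by blast
      have e2: "V - (A - {i}) = (V - A) \<union> {i}" using i AV by blast
      have "ncomp E (V - (A - {i})) \<le> ncomp E V" by (rule minl) (use i in blast)
      then show ?thesis unfolding cut_vertex_def e1 using e2 cut by simp
    qed
    then have "cut_point_property n E A" unfolding cut_point_property_def using AV V_def by blast
    then show ?thesis unfolding CG_def by blast
  qed
  have part2: "A \<subseteq> T \<or> A \<inter> T = {}" if gbg: "generalized_block_graph n E" and T: "T \<in> CG n E" for T
  proof (rule ccontr)
    assume "\<not> (A \<subseteq> T \<or> A \<inter> T = {})"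
    then obtain i j where i: "i \<in> A" "i \<in> T" and j: "j \<in> A" "j \<notin> T" by blast
    have ij: "i \<noteq> j" using i j by blast
    have ch: "chordal n E" using gbg unfolding generalized_block_graph_def by blast
    have "T \<noteq> {}" using i by blast
    then have cpp: "cut_point_property n E T" using T unfolding CG_def by blast
    then have TV: "T \<subseteq> V" unfolding cut_point_property_def V_def by blast
    have cv: "cut_vertex E ((V - T) \<union> {i}) i" using cpp i unfolding cut_point_property_def V_def by blast
    have e1: "(V - T) \<union> {i} - {i} = V - T" using i by blast
    have cvn: "ncomp E ((V - T) \<union> {i}) < ncomp E (V - T)" using cv unfolding cut_vertex_def e1 by simp
    obtain C1 C2 where C: "C1 \<inter> C2 = {}" "C1 \<subseteq> V - A" "C2 \<subseteq> V - A" "\<forall>a\<in>C1. \<forall>b\<in>C2. \<not> E a b"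
      and P1: "\<exists>P1. P1 \<noteq> [] \<and> set P1 \<subseteq> C1 \<and> successively E (i # P1 @ [j])"
      and P2: "\<exists>P2. P2 \<noteq> [] \<and> set P2 \<subseteq> C2 \<and> successively E (j # P2 @ [i])"
      using two_comps[OF sg mc i(1) j(1)] unfolding V_def by blast
    obtain p1 where p1: "p1 \<noteq> []" "set p1 \<subseteq> C1" "successively E (i # p1 @ [j])" using P1 by blast
    obtain p2 where p2: "p2 \<noteq> []" "set p2 \<subseteq> C2" "successively E (j # p2 @ [i])" using P2 by blast
    have nin: "i \<notin> C1" "i \<notin> C2" "j \<notin> C1" "j \<notin> C2" using C(2,3) i j by blast+
    have subs: "C1 \<subseteq> {1..n}" "C2 \<subseteq> {1..n}" "i \<in> {1..n}" "j \<in> {1..n}"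
      using C(2,3) i j AV unfolding V_def by blast+
    have k1: "E i j \<and> (\<exists>x\<in>C1. E i x \<and> E x j)"
      by (rule key[OF ch sym ij C(1) nin C(4) subs p1 p2])
    have C21: "C2 \<inter> C1 = {}" using C(1) by blast
    have noe21: "\<forall>a\<in>C2. \<forall>b\<in>C1. \<not> E a b" using C(4) sym by blast
    have k2: "E j i \<and> (\<exists>x\<in>C2. E j x \<and> E x i)"
      by (rule key[OF ch sym ij[symmetric] C21 nin(4) nin(3) nin(2) nin(1) noe21 subs(2) subs(1) subs(4) subs(3) p2 p1])
    obtain x1 where x1: "x1 \<in> C1" "E i x1" "E x1 j" using k1 by blast
    obtain x2 where x2: "x2 \<in> C2" "E j x2" "E x2 i" using k2 by blast
    have Eij: "E i j" using k1 by blast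
    have x12: "x1 \<noteq> x2" using x1(1) x2(1) C(1) by blast
    have nx12: "\<not> E x1 x2" using x1(1) x2(1) C(4) by blast
    have cl1: "clique n E {i, j, x1}" unfolding clique_def
      using Eij x1 sym inV irr unfolding V_def by auto
    have cl2: "clique n E {i, j, x2}" unfolding clique_def
      using Eij x2 sym inV irr unfolding V_def by auto
    obtain F1 where F1: "facet n E F1" "{i, j, x1} \<subseteq> F1" using facet_exists[OF cl1] by blast
    obtain F2 where F2: "facet n E F2" "{i, j, x2} \<subseteq> F2" using facet_exists[OF cl2] by blast
    have F1cl: "clique n E F1" using F1 unfolding facet_def by blast
    have F12: "F1 \<noteq> F2"
    proof
      assume "F1 = F2"
      then have "x1 \<in> F1" "x2 \<in> F1" using F1 F2 by auto
      then have "E x1 x2" using F1cl x12 unfolding clique_def by blast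
      then show False using nx12 by simp
    qed
    have nb: "\<forall>w\<in>V - T. E i w \<longrightarrow> reach_in E (V - T) j w"
    proof (intro ballI impI)
      fix w assume w: "w \<in> V - T" and e: "E i w"
      have jVT: "j \<in> V - T" using j AV by blast
      show "reach_in E (V - T) j w"
      proof (cases "w = j")
        case True
        then show ?thesis using jVT reach_refl by blast
      next
        case False
        have iw: "i \<noteq> w" using e irr by blast
        have "i \<in> {1..n}" "w \<in> {1..n}" using inV e unfolding V_def by blast+
        then have clw: "clique n E {i, w}" unfolding clique_def
          using e sym by auto
        obtain F3 where F3: "facet n E F3" "{i, w} \<subseteq> F3" using facet_exists[OF clw] by blast
        have jF3: "j \<in> F3"
        proof (cases "F3 = F1 \<or> F3 = F2")
          case True
          then show ?thesis using F1 F2 by blast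
        next
          case False
          have "i \<in> F1 \<inter> F2 \<inter> F3" using F1 F2 F3 by blast
          then have ne: "F1 \<inter> F2 \<inter> F3 \<noteq> {}" by blast
          have gb: "\<forall>Fi Fj Fk. facet n E Fi \<and> facet n E Fj \<and> facet n E Fk \<and>
             Fi \<noteq> Fj \<and> Fi \<noteq> Fk \<and> Fj \<noteq> Fk \<and> Fi \<inter> Fj \<inter> Fk \<noteq> {} \<longrightarrow>
             Fi \<inter> Fj = Fi \<inter> Fk \<and> Fi \<inter> Fk = Fj \<inter> Fk"
            using gbg unfolding generalized_block_graph_def by (rule conjunct2)
          have d: "F1 \<noteq> F3" "F2 \<noteq> F3" using False by auto
          have "facet n E F1 \<and> facet n E F2 \<and> facet n E F3 \<and>
             F1 \<noteq> F2 \<and> F1 \<noteq> F3 \<and> F2 \<noteq> F3 \<and> F1 \<inter> F2 \<inter> F3 \<noteq> {}"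
            using F1(1) F2(1) F3(1) F12 d ne by simp
          then have "F1 \<inter> F2 = F1 \<inter> F3 \<and> F1 \<inter> F3 = F2 \<inter> F3"
            using gb by blast
          then have "F1 \<inter> F2 = F1 \<inter> F3" by (rule conjunct1)
          moreover have "j \<in> F1 \<inter> F2" using F1 F2 by blast
          ultimately show ?thesis by blast
        qed
        have "clique n E F3" using F3 unfolding facet_def by blast
        then have cF3: "\<forall>x\<in>F3. \<forall>y\<in>F3. x \<noteq> y \<longrightarrow> E x y" unfolding clique_def by (rule conjunct2)
        have wF3: "w \<in> F3" using F3(2) by simp
        have "E j w" using cF3 jF3 wF3 False by metis
        moreover have "reach_in E (V - T) j j" using jVT by (rule reach_refl)
        ultimately show ?thesis using reach_step[of E "V - T" j j w] w by simp
      qed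
    qed
    have "ncomp E (V - T) \<le> ncomp E ((V - T) \<union> {i})"
    proof (rule ncomp_add_vertex_le[OF sym])
      show "finite (V - T)" using finV by simp
      show "i \<notin> V - T" using i by blast
      show "j \<in> V - T" using j AV by blast
      show "\<forall>w\<in>V - T. E i w \<longrightarrow> reach_in E (V - T) j w" by (rule nb)
    qed
    then show False using cvn by simp
  qed
  show ?thesis using part1 part2 by blast
qed

end
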